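(* Let $k$ be a positive integer and, for each $n\ge1$, let $\overline{w}_{n,k}$ denote the number of words $w_1\cdots w_n$ with all $w_i\in[n]$ that contain no weakly increasing subsequence of length $k+1$ (i.e. there are no indices $i_1<\dots<i_{k+1}$ with $w_{i_1}\le w_{i_2}\le\dots\le w_{i_{k+1}}$); equivalently, whose standardization avoids the permutation $12\cdots(k+1)$. Then the limit $\lim_{n\to\infty}\overline{w}_{n,k}^{1/n}$ exists and \[\limsup_{n\to\infty}\overline{w}_{n,k}^{1/n}=\frac{k^{k+1}}{(k-1)^{k-1}},\] with the convention $0^0=1$.
   Context: $[n]=\{1,\dots,n\}$. The standardization $\mathrm{std}(w)$ of a word $w=w_1\cdots w_n$ of positive integers is the permutation of $[n]$ obtained by replacing the letters of $w$ by $1,\dots,n$ preserving relative order, where equal letters are numbered increasingly from left to right. A permutation $\pi$ avoids $\sigma\in\mathfrak S_m$ if no subsequence of $\pi$ of length $m$ is order-isomorphic to $\sigma$. *)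

theory Defs
  imports "HOL-Analysis.Analysis"
begin

text \<open>A word of length n over [n] is a function w with w i in {1..n} for i < n,
  and w i = undefined outside (extensional), so words correspond bijectively to such functions.\<close>
definition words :: "nat \<Rightarrow> (nat \<Rightarrow> nat) set" where
  "words n = {0..<n} \<rightarrow>\<^sub>E {1..n}"

definition has_weakly_inc_subseq :: "nat \<Rightarrow> nat \<Rightarrow> (nat \<Rightarrow> nat) \<Rightarrow> bool" where
  "has_weakly_inc_subseq n m w \<longleftrightarrow>
     (\<exists>idx :: nat \<Rightarrow> nat. (\<forall>j<m. idx j < n) \<and> (\<forall>j. Suc j < m \<longrightarrow> idx j < idx (Suc j))
        \<and> (\<forall>j. Suc j < m \<longrightarrow> w (idx j) \<le> w (idx (Suc j))))"

definition wbar :: "nat \<Rightarrow> nat \<Rightarrow> nat" where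
  "wbar n k = card {w \<in> words n. \<not> has_weakly_inc_subseq n (k + 1) w}"

end

theory Submission
  imports Defs "HOL-Combinatorics.Multiset_Permutations"
begin

definition wchain :: "(nat \<Rightarrow> nat) \<Rightarrow> nat list \<Rightarrow> bool" where
  "wchain w xs \<longleftrightarrow> sorted_wrt (<) xs \<and> sorted_wrt (\<lambda>a b. w a \<le> w b) xs"

lemma wchain_has:
  assumes "wchain w xs" "length xs = m" "set xs \<subseteq> {..<n}"
  shows "has_weakly_inc_subseq n m w"
  unfolding has_weakly_inc_subseq_def
proof (intro exI[of _ "\<lambda>j. xs ! j"] conjI allI impI)
  fix j assume "j < m" thus "xs ! j < n" using assms nth_mem by fastforce
next
  fix j assume "Suc j < m" thus "xs!j < xs!Suc j" using assms unfolding wchain_def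
    by (simp add: sorted_wrt_nth_less)
next
  fix j assume "Suc j < m" thus "w (xs!j) \<le> w (xs!Suc j)" using assms
    sorted_wrt_nth_less[of "\<lambda>a b. w a \<le> w b" xs j "Suc j"] unfolding wchain_def by simp
qed

lemma wchain_last:
  assumes "wchain w xs" "xs \<noteq> []" "x \<in> set xs" shows "w x \<le> w (last xs)"
proof -
  have xs: "xs = butlast xs @ [last xs]" using assms(2) by simp
  have "sorted_wrt (\<lambda>a b. w a \<le> w b) (butlast xs @ [last xs])"
    using assms(1,2) unfolding wchain_def by simp
  then have "\<forall>y\<in>set (butlast xs). w y \<le> w (last xs)" by (simp only: sorted_wrt_append) simp
  moreover have "x \<in> set (butlast xs @ [last xs])" using assms(2,3) by simp
  then have "x \<in> set (butlast xs) \<or> x = last xs" unfolding set_append by auto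
  ultimately show ?thesis by auto
qed

lemma labeling_prefix:
  fixes w :: "nat \<Rightarrow> nat"
  shows "\<exists>l. (\<forall>i<m. \<exists>xs. wchain w xs \<and> xs \<noteq> [] \<and> last xs = i \<and> set xs \<subseteq> {..i} \<and> length xs = Suc (l i))
      \<and> (\<forall>i i'. i < i' \<and> i' < m \<and> w i \<le> w i' \<longrightarrow> l i < l i')"
proof (induction m)
  case 0 show ?case by auto
next
  case (Suc m)
  then obtain l where H1: "\<forall>i<m. \<exists>xs. wchain w xs \<and> xs \<noteq> [] \<and> last xs = i \<and> set xs \<subseteq> {..i} \<and> length xs = Suc (l i)"
    and H2: "\<forall>i i'. i < i' \<and> i' < m \<and> w i \<le> w i' \<longrightarrow> l i < l i'" by blast
  define Q where "Q = {i. i < m \<and> w i \<le> w m}"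
  define v where "v = (if Q = {} then 0 else Suc (Max (l ` Q)))"
  define l' where "l' = l(m := v)"
  have fin: "finite Q" unfolding Q_def by auto
  have chain_m: "\<exists>xs. wchain w xs \<and> xs \<noteq> [] \<and> last xs = m \<and> set xs \<subseteq> {..m} \<and> length xs = Suc v"
  proof (cases "Q = {}")
    case True
    then show ?thesis unfolding v_def wchain_def by (intro exI[of _ "[m]"]) auto
  next
    case False
    have "Max (l ` Q) \<in> l ` Q" using False fin by simp
    then obtain i0 where i0: "i0 \<in> Q" "l i0 = Max (l ` Q)" by auto
    then have i0m: "i0 < m" "w i0 \<le> w m" unfolding Q_def by auto
    then obtain xs where xs: "wchain w xs" "xs \<noteq> []" "last xs = i0" "set xs \<subseteq> {..i0}" "length xs = Suc (l i0)"
      using H1 by blast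
    have "\<forall>x\<in>set xs. x < m" using xs(4) i0m by auto
    moreover have "\<forall>x\<in>set xs. w x \<le> w m" using wchain_last[OF xs(1,2)] xs(3) i0m le_trans by blast
    ultimately have "wchain w (xs @ [m])"
      using xs(1) unfolding wchain_def by (auto simp: sorted_wrt_append)
    then show ?thesis using xs False i0 i0m unfolding v_def by (intro exI[of _ "xs @ [m]"]) auto
  qed
  show ?case
  proof (intro exI[of _ l'] conjI allI impI)
    fix i assume "i < Suc m"
    then show "\<exists>xs. wchain w xs \<and> xs \<noteq> [] \<and> last xs = i \<and> set xs \<subseteq> {..i} \<and> length xs = Suc (l' i)"
      using chain_m H1 unfolding l'_def by (cases "i = m") auto
  next
    fix i i' assume a: "i < i' \<and> i' < Suc m \<and> w i \<le> w i'"
    show "l' i < l' i'"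
    proof (cases "i' = m")
      case True
      then have "i \<in> Q" using a unfolding Q_def by auto
      then have "l i \<le> Max (l ` Q)" using fin by simp
      then show ?thesis using True a \<open>i \<in> Q\<close> unfolding l'_def v_def by auto
    next
      case False
      then show ?thesis using a H2 unfolding l'_def by auto
    qed
  qed
qed

lemma labeling_exists:
  assumes "\<not> has_weakly_inc_subseq n (k+1) w"
  shows "\<exists>l\<in>{0..<n} \<rightarrow>\<^sub>E {0..<k}. \<forall>i i'. i < i' \<and> i' < n \<and> l i = l i' \<longrightarrow> w i' < w i"
proof -
  obtain l where H1: "\<forall>i<n. \<exists>xs. wchain w xs \<and> xs \<noteq> [] \<and> last xs = i \<and> set xs \<subseteq> {..i} \<and> length xs = Suc (l i)"
    and H2: "\<forall>i i'. i < i' \<and> i' < n \<and> w i \<le> w i' \<longrightarrow> l i < l i'"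
    using labeling_prefix[of n w] by blast
  have lt: "l i < k" if iN: "i < n" for i
  proof (rule ccontr)
    assume nl: "\<not> l i < k"
    obtain xs where xs: "wchain w xs" "xs \<noteq> []" "last xs = i" "set xs \<subseteq> {..i}" "length xs = Suc (l i)"
      using H1 iN by blast
    have "wchain w (take (k+1) xs)" using xs(1) unfolding wchain_def by (simp add: sorted_wrt_take)
    moreover have "length (take (k+1) xs) = k+1" using xs nl by simp
    moreover have "set (take (k+1) xs) \<subseteq> {..<n}" using xs(4) iN set_take_subset by fastforce
    ultimately show False using wchain_has assms by blast
  qed
  show ?thesis
  proof (rule bexI[of _ "restrict l {0..<n}"])
    show "restrict l {0..<n} \<in> {0..<n} \<rightarrow>\<^sub>E {0..<k}" using lt by auto
    show "\<forall>i i'. i < i' \<and> i' < n \<and> restrict l {0..<n} i = restrict l {0..<n} i' \<longrightarrow> w i' < w i"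
    proof (intro allI impI)
      fix i i' assume a: "i < i' \<and> i' < n \<and> restrict l {0..<n} i = restrict l {0..<n} i'"
      then have e: "l i = l i'" by auto
      show "w i' < w i"
      proof (rule ccontr)
        assume "\<not> w i' < w i"
        then have "w i \<le> w i'" by simp
        then have "l i < l i'" using H2 a by blast
        then show False using e by simp
      qed
    qed
  qed
qed

lemma card_gt_lt:
  fixes S :: "nat set"
  assumes "finite S" "a < b" "b \<in> S"
  shows "card {v\<in>S. b < v} < card {v\<in>S. a < v}"
  by (rule psubset_card_mono) (use assms in auto)

lemma antimono_unique:
  fixes f g :: "nat \<Rightarrow> nat"
  assumes C: "finite C" and f: "\<forall>x\<in>C. \<forall>y\<in>C. x < y \<longrightarrow> f y < f x"
    and g: "\<forall>x\<in>C. \<forall>y\<in>C. x < y \<longrightarrow> g y < g x"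
    and fg: "f ` C = g ` C" and x: "x \<in> C"
  shows "f x = g x"
proof -
  have key: "card {v \<in> h ` C. h x < v} = card {y\<in>C. y < x}"
    if h: "\<forall>x\<in>C. \<forall>y\<in>C. x < y \<longrightarrow> h y < h x" for h :: "nat\<Rightarrow>nat"
  proof -
    have inj: "inj_on h C"
    proof (rule inj_onI)
      fix a b assume ab: "a \<in> C" "b \<in> C" "h a = h b"
      show "a = b"
      proof (rule ccontr)
        assume "a \<noteq> b"
        then consider "a < b" | "b < a" by linarith
        then show False using ab h by cases force+
      qed
    qed
    have "{v \<in> h ` C. h x < v} = h ` {y\<in>C. y < x}"
    proof
      show "h ` {y\<in>C. y < x} \<subseteq> {v \<in> h ` C. h x < v}" using h x by auto
      show "{v \<in> h ` C. h x < v} \<subseteq> h ` {y\<in>C. y < x}"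
      proof
        fix v assume "v \<in> {v \<in> h ` C. h x < v}"
        then obtain y where y: "y \<in> C" "v = h y" "h x < h y" by auto
        have "y < x"
        proof (rule ccontr)
          assume "\<not> y < x"
          then have "x = y \<or> x < y" by linarith
          then show False using y h x by force
        qed
        then show "v \<in> h ` {y\<in>C. y < x}" using y by auto
      qed
    qed
    moreover have "inj_on h {y\<in>C. y < x}" using inj by (rule inj_on_subset) auto
    ultimately show ?thesis by (simp add: card_image)
  qed
  have e: "card {v \<in> f ` C. f x < v} = card {v \<in> f ` C. g x < v}"
    using key[OF f] key[OF g] fg by simp
  show ?thesis
  proof (rule ccontr)
    assume "f x \<noteq> g x"
    then consider "f x < g x" | "g x < f x" by linarith
    then show False
    proof cases
      case 1 then show False using card_gt_lt[of "f ` C" "f x" "g x"] e C x fg by auto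
    next
      case 2 then show False using card_gt_lt[of "f ` C" "g x" "f x"] e C x fg by auto
    qed
  qed
qed

lemma antimono_inj:
  fixes h :: "nat \<Rightarrow> nat"
  assumes h: "\<forall>x\<in>C. \<forall>y\<in>C. x < y \<longrightarrow> h y < h x"
  shows "inj_on h C"
proof (rule inj_onI)
  fix a b assume ab: "a \<in> C" "b \<in> C" "h a = h b"
  show "a = b"
  proof (rule ccontr)
    assume "a \<noteq> b"
    then consider "a < b" | "b < a" by linarith
    then show False using ab h by cases force+
  qed
qed

lemma wbar_upper_sum:
  "wbar n k \<le> (\<Sum>l\<in>{0..<n} \<rightarrow>\<^sub>E {0..<k}. \<Prod>j<k. n choose card {i\<in>{0..<n}. l i = j})"
proof -
  define \<Lambda> where "\<Lambda> = {0..<n} \<rightarrow>\<^sub>E {0..<k}"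
  define W where "W l = {w\<in>words n. \<forall>i i'. i < i' \<and> i' < n \<and> l i = l i' \<longrightarrow> w i' < w i}" for l :: "nat \<Rightarrow> nat"
  have finL: "finite \<Lambda>" unfolding \<Lambda>_def by (simp add: finite_PiE)
  have sub: "{w \<in> words n. \<not> has_weakly_inc_subseq n (k + 1) w} \<subseteq> (\<Union>l\<in>\<Lambda>. W l)"
  proof
    fix w assume "w \<in> {w \<in> words n. \<not> has_weakly_inc_subseq n (k + 1) w}"
    then have w: "w \<in> words n" "\<not> has_weakly_inc_subseq n (k + 1) w" by auto
    obtain l where "l \<in> \<Lambda>" "\<forall>i i'. i < i' \<and> i' < n \<and> l i = l i' \<longrightarrow> w i' < w i"
      using labeling_exists[OF w(2)] unfolding \<Lambda>_def by blast
    then show "w \<in> (\<Union>l\<in>\<Lambda>. W l)" using w(1) unfolding W_def by blast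
  qed
  have finW: "finite (W l)" for l unfolding W_def words_def by (simp add: finite_PiE)
  have "wbar n k \<le> card (\<Union>l\<in>\<Lambda>. W l)"
    unfolding wbar_def by (rule card_mono) (use sub finL finW in auto)
  also have "\<dots> \<le> (\<Sum>l\<in>\<Lambda>. card (W l))" by (rule card_UN_le[OF finL])
  also have "\<dots> \<le> (\<Sum>l\<in>\<Lambda>. \<Prod>j<k. n choose card {i\<in>{0..<n}. l i = j})"
  proof (rule sum_mono)
    fix l assume lL: "l \<in> \<Lambda>"
    define cl where "cl j = {i\<in>{0..<n}. l i = j}" for j
    define F where "F w = (\<lambda>j\<in>{0..<k}. w ` cl j)" for w :: "nat \<Rightarrow> nat"
    define Tg where "Tg = PiE {0..<k} (\<lambda>j. {B. B \<subseteq> {1..n} \<and> card B = card (cl j)})"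
    have decW: "\<forall>x\<in>cl j. \<forall>y\<in>cl j. x < y \<longrightarrow> w y < w x" if "w \<in> W l" for w j
      using that unfolding W_def cl_def by auto
    have wW: "w \<in> words n" if "w \<in> W l" for w using that unfolding W_def by auto
    have "inj_on F (W l)"
    proof (rule inj_onI)
      fix w w' assume w: "w \<in> W l" and w': "w' \<in> W l" and eq: "F w = F w'"
      show "w = w'"
      proof (rule ext)
        fix i show "w i = w' i"
        proof (cases "i < n")
          case False
          then have "i \<notin> {0..<n}" by simp
          moreover have "w \<in> {0..<n} \<rightarrow>\<^sub>E {1..n}" "w' \<in> {0..<n} \<rightarrow>\<^sub>E {1..n}"
            using wW[OF w] wW[OF w'] unfolding words_def by auto
          ultimately show ?thesis using PiE_arb by metis
        next
          case True
          then have lk: "l i \<in> {0..<k}" using lL unfolding \<Lambda>_def by auto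
          have A: "w ` cl (l i) = w' ` cl (l i)" using fun_cong[OF eq, of "l i"] lk unfolding F_def by simp
          have B: "finite (cl (l i))" unfolding cl_def by auto
          have E: "i \<in> cl (l i)" using True unfolding cl_def by auto
          show ?thesis by (rule antimono_unique[OF B decW[OF w] decW[OF w'] A E])
        qed
      qed
    qed
    moreover have "F ` W l \<subseteq> Tg"
    proof
      fix B assume "B \<in> F ` W l"
      then obtain w where w: "w \<in> W l" "B = F w" by auto
      have dec: "\<forall>x\<in>cl j. \<forall>y\<in>cl j. x < y \<longrightarrow> w y < w x" for j
        using w(1) unfolding W_def cl_def by auto
      have inj: "inj_on w (cl j)" for j by (rule antimono_inj[OF dec])
      have sub1: "w ` cl j \<subseteq> {1..n}" for j using w(1) unfolding W_def words_def cl_def by auto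
      have "card (w ` cl j) = card (cl j)" for j using inj by (rule card_image)
      then show "B \<in> Tg" unfolding Tg_def w(2) F_def using sub1 by auto
    qed
    moreover have "finite Tg" unfolding Tg_def by (intro finite_PiE) auto
    ultimately have cW: "card (W l) \<le> card Tg" using card_inj_on_le by blast
    have cT: "card Tg = (\<Prod>j<k. n choose card (cl j))"
      unfolding Tg_def by (simp add: card_PiE n_subsets atLeast0LessThan)
    have "card (W l) \<le> (\<Prod>j<k. n choose card (cl j))" using cW cT by simp
    then show "card (W l) \<le> (\<Prod>j<k. n choose card {i\<in>{0..<n}. l i = j})" by (simp add: cl_def)
  qed
  finally show ?thesis unfolding \<Lambda>_def .
qed

lemma choose_le_pow:
  fixes x :: real assumes "x > 0" shows "real (n choose c) \<le> (1+x)^n / x^c"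
proof (cases "c \<le> n")
  case True
  have "real (n choose c) * x^c \<le> (\<Sum>i\<le>n. real (n choose i) * x^i)"
    by (rule member_le_sum[of c "{..n}" "\<lambda>i. real (n choose i) * x^i"]) (use True assms in auto)
  also have "\<dots> = (x+1)^n" using binomial_ring[of x 1 n] by simp
  finally show ?thesis using assms by (simp add: field_simps add.commute)
next
  case False then show ?thesis using assms by (simp add: binomial_eq_0)
qed

lemma wbar_upper:
  assumes "k \<ge> 1"
  shows "real (wbar n k) \<le> (real k ^ (k + 1) / real (k - 1) ^ (k - 1)) ^ n"
proof -
  define c where "c l j = card {i\<in>{0..<n}. l i = j}" for l :: "nat \<Rightarrow> nat" and j
  have "real (wbar n k) \<le> (\<Sum>l\<in>{0..<n} \<rightarrow>\<^sub>E {0..<k}. \<Prod>j<k. real (n choose c l j))"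
    using wbar_upper_sum[of n k] unfolding c_def by (metis (no_types, lifting) of_nat_le_iff of_nat_prod of_nat_sum prod.cong sum.cong)
  also have "\<dots> \<le> (real k ^ (k + 1) / real (k - 1) ^ (k - 1)) ^ n"
  proof (cases "k = 1")
    case True
    have "(\<Prod>j<k. real (n choose c l j)) = 1" if "l \<in> {0..<n} \<rightarrow>\<^sub>E {0..<k}" for l
    proof -
      have "{i\<in>{0..<n}. l i = 0} = {0..<n}" using that True by auto
      then show ?thesis using True unfolding c_def by simp
    qed
    then have "(\<Sum>l\<in>{0..<n} \<rightarrow>\<^sub>E {0..<k}. \<Prod>j<k. real (n choose c l j)) = card ({0..<n} \<rightarrow>\<^sub>E {0..<k})"
      by simp
    also have "\<dots> = 1" using True by (simp add: card_PiE)
    finally show ?thesis using True by simp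
  next
    case False
    then have k2: "k \<ge> 2" using assms by simp
    define r where "r = real k - 1"
    have r0: "r > 0" using k2 unfolding r_def by simp
    define x where "x = 1 / r"
    have x0: "x > 0" using r0 unfolding x_def by simp
    have sc: "(\<Sum>j<k. c l j) = n" if "l \<in> {0..<n} \<rightarrow>\<^sub>E {0..<k}" for l
    proof -
      have "(\<Sum>j\<in>{..<k}. \<Sum>i\<in>{i\<in>{0..<n}. l i = j}. (1::nat)) = (\<Sum>i\<in>{0..<n}. 1)"
        by (rule sum.group) (use that in auto)
      then show ?thesis unfolding c_def by simp
    qed
    have tm: "(\<Prod>j<k. real (n choose c l j)) \<le> (1+x)^(n*k) / x^n" if "l \<in> {0..<n} \<rightarrow>\<^sub>E {0..<k}" for l
    proof -
      have "(\<Prod>j<k. real (n choose c l j)) \<le> (\<Prod>j<k. (1+x)^n / x^(c l j))"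
        by (rule prod_mono) (use choose_le_pow[OF x0] in auto)
      also have "\<dots> = ((1+x)^n)^k / (\<Prod>j<k. x^(c l j))"
        by (simp add: prod_dividef)
      also have "(\<Prod>j<k. x^(c l j)) = x^n" using sc[OF that] power_sum[of x "c l" "{..<k}"] by simp
      finally show ?thesis by (simp add: power_mult)
    qed
    have "(\<Sum>l\<in>{0..<n} \<rightarrow>\<^sub>E {0..<k}. \<Prod>j<k. real (n choose c l j))
        \<le> (\<Sum>l\<in>{0..<n} \<rightarrow>\<^sub>E {0..<k}. (1+x)^(n*k) / x^n)"
      by (rule sum_mono) (use tm in auto)
    also have "\<dots> = real k ^ n * ((1+x)^(n*k) / x^n)" by (simp add: card_PiE)
    also have "\<dots> = (real k * (1+x)^k / x)^n"
    proof -
      have "(real k * (1+x)^k / x)^n = real k^n * ((1+x)^k)^n / x^n" by (simp add: power_mult_distrib power_divide)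
      also have "((1+x)^k)^n = (1+x)^(n*k)" by (metis power_mult mult.commute)
      finally show ?thesis by simp
    qed
    also have "real k * (1+x)^k / x = real k ^ (k + 1) / real (k - 1) ^ (k - 1)"
    proof -
      obtain m where m: "k = Suc m" using k2 by (cases k) auto
      have rk: "real (k - 1) = r" unfolding r_def using k2 by simp
      have "1 + x = real k / r" unfolding x_def r_def using r0 r_def by (simp add: field_simps)
      then have "real k * (1+x)^k / x = real k * (real k ^ k / r ^ k) * r"
        unfolding x_def by (simp add: power_divide)
      also have "\<dots> = real k ^ (k+1) / r ^ m" using r0 m by (simp add: field_simps)
      finally show ?thesis using rk m by simp
    qed
    finally show ?thesis .
  qed
  finally show ?thesis .
qed

definition cI :: "nat \<Rightarrow> nat \<Rightarrow> nat set" where "cI c s = {s*c+1 .. s*c+c}"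
definition Mk :: "nat \<Rightarrow> nat \<Rightarrow> nat multiset" where "Mk k b = (\<Sum>j\<in>{0..<k}. replicate_mset b j)"
definition rk :: "nat list \<Rightarrow> nat \<Rightarrow> nat" where "rk xs u = count (mset (take u xs)) (xs ! u)"
definition dv :: "nat set \<Rightarrow> nat \<Rightarrow> nat" where "dv B r = rev (sorted_list_of_set B) ! r"

lemma dv_in: "finite B \<Longrightarrow> r < card B \<Longrightarrow> dv B r \<in> B"
  unfolding dv_def using nth_mem[of r "rev (sorted_list_of_set B)"] by simp

lemma dv_dec:
  assumes "finite B" "r < r'" "r' < card B"
  shows "dv B r' < dv B r"
proof -
  let ?xs = "sorted_list_of_set B"
  have len: "length ?xs = card B" by simp
  have s: "sorted_wrt (<) ?xs" by (rule strict_sorted_list_of_set)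
  have "?xs ! (card B - Suc r') < ?xs ! (card B - Suc r)"
    using sorted_wrt_nth_less[OF s, of "card B - Suc r'" "card B - Suc r"] assms len by simp
  then show ?thesis unfolding dv_def using assms len by (simp add: rev_nth)
qed

lemma dv_inj:
  assumes "finite B" "finite B'" "card B = b" "card B' = b" "\<forall>r<b. dv B r = dv B' r"
  shows "B = B'"
proof -
  have "rev (sorted_list_of_set B) = rev (sorted_list_of_set B')"
    by (rule nth_equalityI) (use assms in \<open>auto simp: dv_def\<close>)
  then have "sorted_list_of_set B = sorted_list_of_set B'" by simp
  then have "set (sorted_list_of_set B) = set (sorted_list_of_set B')" by simp
  then show ?thesis using assms by simp
qed

lemma count_take_Suc:
  "u < length xs \<Longrightarrow> count (mset (take (Suc u) xs)) (xs!u) = Suc (count (mset (take u xs)) (xs!u))"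
  by (simp add: take_Suc_conv_app_nth)

lemma count_take_mono:
  assumes "m \<le> m'" shows "count (mset (take m xs)) a \<le> count (mset (take m' xs)) a"
proof -
  have "take m' xs = take m xs @ take (m' - m) (drop m xs)"
    using take_add[of m "m' - m" xs] assms by simp
  then show ?thesis by (metis count_union le_add1 mset_append)
qed

lemma rk_lt:
  assumes "u < length xs" shows "rk xs u < count (mset xs) (xs!u)"
proof -
  have "rk xs u < count (mset (take (Suc u) xs)) (xs!u)" unfolding rk_def using count_take_Suc[OF assms] by simp
  also have "\<dots> \<le> count (mset (take (length xs) xs)) (xs!u)" by (rule count_take_mono) (use assms in simp)
  finally show ?thesis by simp
qed

lemma rk_mono:
  assumes "u < u'" "u' < length xs" "xs!u = xs!u'" shows "rk xs u < rk xs u'"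
proof -
  have "rk xs u < count (mset (take (Suc u) xs)) (xs!u)" unfolding rk_def
    using count_take_Suc[of u xs] assms by simp
  also have "\<dots> \<le> count (mset (take u' xs)) (xs!u)" by (rule count_take_mono) (use assms in simp)
  finally show ?thesis unfolding rk_def using assms by simp
qed

lemma count_take_surj:
  "r < count (mset xs) a \<Longrightarrow> \<exists>u<length xs. xs!u = a \<and> count (mset (take u xs)) a = r"
proof (induction xs arbitrary: r)
  case Nil then show ?case by simp
next
  case (Cons y ys)
  show ?case
  proof (cases "y = a")
    case True
    show ?thesis
    proof (cases r)
      case 0 then show ?thesis using True by (intro exI[of _ 0]) auto
    next
      case (Suc r')
      then have "r' < count (mset ys) a" using Cons.prems True by simp
      then obtain u where "u < length ys" "ys!u = a" "count (mset (take u ys)) a = r'" using Cons.IH by blast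
      then show ?thesis using True Suc by (intro exI[of _ "Suc u"]) auto
    qed
  next
    case False
    then have "r < count (mset ys) a" using Cons.prems by simp
    then obtain u where "u < length ys" "ys!u = a" "count (mset (take u ys)) a = r" using Cons.IH by blast
    then show ?thesis using False by (intro exI[of _ "Suc u"]) auto
  qed
qed

lemma cI_bounds: "v \<in> cI c s \<Longrightarrow> s*c < v \<and> v \<le> s*c + c"
  unfolding cI_def by auto

lemma cI_less:
  assumes "v \<in> cI c s" "v' \<in> cI c s'" "s' < s" shows "v' < v"
proof -
  have "Suc s' * c \<le> s * c" using assms(3) by (intro mult_le_mono1) simp
  then show ?thesis using cI_bounds[OF assms(1)] cI_bounds[OF assms(2)] by simp
qed

lemma cI_eq:
  assumes "v \<in> cI c s" "v \<in> cI c s'" shows "s = s'"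
  using cI_less[OF assms(1,2)] cI_less[OF assms(2,1)] by (metis less_irrefl linorder_neqE_nat)

lemma count_Mk: "count (Mk k b) j = (if j < k then b else 0)"
  unfolding Mk_def count_sum by (simp add: sum.delta')

lemma size_Mk: "size (Mk k b) = k * b"
proof (induction k)
  case 0 then show ?case by (simp add: Mk_def)
next
  case (Suc k)
  have "Mk (Suc k) b = Mk k b + replicate_mset b k" unfolding Mk_def by simp
  then show ?case using Suc by simp
qed

lemma set_Mk: "b \<ge> 1 \<Longrightarrow> set_mset (Mk k b) = {0..<k}"
  using count_Mk[of k b] by (auto simp: set_mset_def split: if_splits)

lemma perm_Mk:
  assumes "xs \<in> permutations_of_multiset (Mk k b)" "b \<ge> 1"
  shows "length xs = k*b" "set xs = {0..<k}" "\<And>j. j < k \<Longrightarrow> count (mset xs) j = b"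
proof -
  have m: "mset xs = Mk k b" using assms by (simp add: permutations_of_multiset_def)
  show "length xs = k*b" using size_Mk[of k b] m by (metis size_mset)
  show "set xs = {0..<k}" using set_Mk[OF assms(2), of k] m by (metis set_mset_mset)
  show "\<And>j. j < k \<Longrightarrow> count (mset xs) j = b" using m count_Mk by simp
qed

lemma card_perm_Mk:
  assumes "b \<ge> 1"
  shows "real (card (permutations_of_multiset (Mk k b))) = fact (k*b) / (fact b)^k"
proof -
  have p: "(\<Prod>x\<in>set_mset (Mk k b). fact (count (Mk k b) x) :: nat) = fact b ^ k"
    using set_Mk[OF assms, of k] by (simp add: count_Mk)
  have "card (permutations_of_multiset (Mk k b)) = fact (k*b) div (fact b ^ k)"
    using card_permutations_of_multiset(1)[of "Mk k b"] p size_Mk by simp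
  moreover have "(fact b ^ k :: nat) dvd fact (k*b)"
    using card_permutations_of_multiset(2)[of "Mk k b"] p size_Mk by simp
  ultimately show ?thesis by (simp add: real_of_nat_div)
qed

lemma chain_lt:
  assumes "\<forall>j. Suc j < m \<longrightarrow> idx j < (idx (Suc j) :: nat)" "a < a'" "a' < m"
  shows "idx a < idx a'"
  using assms(2,3)
proof (induction a')
  case 0 then show ?case by simp
next
  case (Suc a')
  then show ?case using assms(1) by (cases "a = a'") (auto intro: less_trans)
qed

lemma chain_le:
  assumes "\<forall>j. Suc j < m \<longrightarrow> w (idx j) \<le> (w (idx (Suc j)) :: nat)" "a \<le> a'" "a' < m"
  shows "w (idx a) \<le> w (idx a')"
  using assms(2,3)
proof (induction a')
  case 0 then show ?case by simp
next
  case (Suc a')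
  then show ?case using assms(1) by (cases "a = Suc a'") (auto intro: le_trans)
qed

definition cw :: "nat \<Rightarrow> nat \<Rightarrow> nat \<Rightarrow> nat \<Rightarrow> (nat \<Rightarrow> nat list) \<Rightarrow> (nat \<Rightarrow> nat \<Rightarrow> nat set) \<Rightarrow> nat \<Rightarrow> nat" where
  "cw k b T n \<sigma> A i = (if i < n - T*(k*b) then n - i else if i < n then
      dv (A ((i - (n - T*(k*b))) div (k*b)) (\<sigma> ((i - (n - T*(k*b))) div (k*b)) ! ((i - (n - T*(k*b))) mod (k*b))))
         (rk (\<sigma> ((i - (n - T*(k*b))) div (k*b))) ((i - (n - T*(k*b))) mod (k*b)))
    else undefined)"

definition DS :: "nat \<Rightarrow> nat \<Rightarrow> nat \<Rightarrow> ((nat \<Rightarrow> nat list) \<times> (nat \<Rightarrow> nat \<Rightarrow> nat set)) set" where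
  "DS k b T = (PiE {0..<T} (\<lambda>_. permutations_of_multiset (Mk k b))) \<times>
      (PiE {0..<T} (\<lambda>t. PiE {0..<k} (\<lambda>j. {B. B \<subseteq> cI (k*b-1) (j + (T-1-t)) \<and> card B = b})))"

context
  fixes k b T n :: nat
  assumes k2: "2 \<le> k" and b1: "1 \<le> b" and TKn: "T*(k*b) \<le> n"
    and vals: "(T+k-1)*(k*b-1) \<le> T*(k*b)"
begin


lemma K_pos: "(k*b) > 0" using k2 b1 by simp

lemma pos_bounds:
  assumes "(n - T*(k*b)) \<le> i" "i < n"
  shows "(i - (n - T*(k*b))) div (k*b) < T" "(i - (n - T*(k*b))) mod (k*b) < (k*b)"
proof -
  have "i - (n - T*(k*b)) < T * (k*b)" using assms TKn by linarith
  then show "(i - (n - T*(k*b))) div (k*b) < T" by (rule less_mult_imp_div_less)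
  show "(i - (n - T*(k*b))) mod (k*b) < (k*b)" using K_pos by simp
qed

lemma pos_decomp:
  assumes "t < T" "u < (k*b)"
  shows "(n - T*(k*b)) + t*(k*b) + u < n" "((n - T*(k*b)) + t*(k*b) + u - (n - T*(k*b))) div (k*b) = t" "((n - T*(k*b)) + t*(k*b) + u - (n - T*(k*b))) mod (k*b) = u" "(n - T*(k*b)) \<le> (n - T*(k*b)) + t*(k*b) + u"
proof -
  have "t*(k*b) + u < Suc t * (k*b)" using assms by simp
  also have "\<dots> \<le> T * (k*b)" using assms by (intro mult_le_mono1) simp
  finally show "(n - T*(k*b)) + t*(k*b) + u < n" using TKn by linarith
  show "((n - T*(k*b)) + t*(k*b) + u - (n - T*(k*b))) div (k*b) = t" using assms K_pos by simp
  show "((n - T*(k*b)) + t*(k*b) + u - (n - T*(k*b))) mod (k*b) = u" using assms K_pos by simp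
  show "(n - T*(k*b)) \<le> (n - T*(k*b)) + t*(k*b) + u" by simp
qed

lemma DS_facts:
  assumes D: "(\<sigma>, A) \<in> DS k b T" and t: "t < T"
  shows "length (\<sigma> t) = (k*b)" "set (\<sigma> t) = {0..<k}" "\<And>j. j < k \<Longrightarrow> count (mset (\<sigma> t)) j = b"
    "\<And>j. j < k \<Longrightarrow> A t j \<subseteq> cI (k*b - 1) (j + (T-1-t))" "\<And>j. j < k \<Longrightarrow> card (A t j) = b"
    "\<And>j. j < k \<Longrightarrow> finite (A t j)"
proof -
  have SP: "\<sigma> \<in> PiE {0..<T} (\<lambda>_. permutations_of_multiset (Mk k b))" using D unfolding DS_def by simp
  have s: "\<sigma> t \<in> permutations_of_multiset (Mk k b)" using PiE_mem[OF SP, of t] t by simp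
  show "length (\<sigma> t) = (k*b)" "set (\<sigma> t) = {0..<k}" "\<And>j. j < k \<Longrightarrow> count (mset (\<sigma> t)) j = b"
    using perm_Mk[OF s b1] by auto
  have AP: "A \<in> PiE {0..<T} (\<lambda>t. PiE {0..<k} (\<lambda>j. {B. B \<subseteq> cI (k*b-1) (j + (T-1-t)) \<and> card B = b}))"
    using D unfolding DS_def by simp
  have At: "A t \<in> PiE {0..<k} (\<lambda>j. {B. B \<subseteq> cI (k*b-1) (j + (T-1-t)) \<and> card B = b})"
    using PiE_mem[OF AP, of t] t by simp
  have "A t j \<in> {B. B \<subseteq> cI (k*b-1) (j + (T-1-t)) \<and> card B = b}" if "j < k" for j
    using PiE_mem[OF At, of j] that by simp
  then show a: "\<And>j. j < k \<Longrightarrow> A t j \<subseteq> cI (k*b - 1) (j + (T-1-t))" "\<And>j. j < k \<Longrightarrow> card (A t j) = b"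
    by auto
  show "\<And>j. j < k \<Longrightarrow> finite (A t j)" using a(1) unfolding cI_def by (meson finite_atLeastAtMost finite_subset)
qed

lemma cw_at:
  assumes "(n - T*(k*b)) \<le> i" "i < n"
  shows "cw k b T n \<sigma> A i = dv (A ((i - (n - T*(k*b))) div (k*b)) (\<sigma> ((i - (n - T*(k*b))) div (k*b)) ! ((i - (n - T*(k*b))) mod (k*b))))
         (rk (\<sigma> ((i - (n - T*(k*b))) div (k*b))) ((i - (n - T*(k*b))) mod (k*b)))"
  using assms unfolding cw_def by simp

lemma cw_val:
  assumes D: "(\<sigma>, A) \<in> DS k b T" and t: "t < T" and u: "u < (k*b)"
  shows "cw k b T n \<sigma> A ((n - T*(k*b)) + t*(k*b) + u) = dv (A t (\<sigma> t ! u)) (rk (\<sigma> t) u)"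
    "cw k b T n \<sigma> A ((n - T*(k*b)) + t*(k*b) + u) \<in> cI (k*b - 1) (\<sigma> t ! u + (T-1-t))"
    "\<sigma> t ! u < k"
proof -
  note pd = pos_decomp[OF t u]
  have q: "(n - T*(k*b)) + t*(k*b) + u - (n - T*(k*b)) = t*(k*b) + u" by simp
  have q2: "(t*(k*b) + u) div (k*b) = t" "(t*(k*b)+u) mod (k*b) = u" using pd(2,3) unfolding q .
  show e: "cw k b T n \<sigma> A ((n - T*(k*b)) + t*(k*b) + u) = dv (A t (\<sigma> t ! u)) (rk (\<sigma> t) u)"
    using cw_at[OF pd(4) pd(1)] unfolding q q2 .
  note F = DS_facts[OF D t]
  show j: "\<sigma> t ! u < k" using F(1,2) u by (metis atLeastLessThan_iff nth_mem)
  have "rk (\<sigma> t) u < b" using rk_lt[of u "\<sigma> t"] F(1) F(3)[OF j] u by simp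
  then have "dv (A t (\<sigma> t ! u)) (rk (\<sigma> t) u) \<in> A t (\<sigma> t ! u)"
    using dv_in F(5,6)[OF j] by simp
  then show "cw k b T n \<sigma> A ((n - T*(k*b)) + t*(k*b) + u) \<in> cI (k*b - 1) (\<sigma> t ! u + (T-1-t))" using e F(4)[OF j] by auto
qed

lemma cw_decomp:
  assumes "(n - T*(k*b)) \<le> i" "i < n"
  obtains t u where "t < T" "u < (k*b)" "i = (n - T*(k*b)) + t*(k*b) + u"
proof -
  have "i = (n - T*(k*b)) + ((i-(n - T*(k*b))) div (k*b))*(k*b) + (i-(n - T*(k*b))) mod (k*b)"
    using assms div_mult_mod_eq[of "i-(n - T*(k*b))" "k*b"] by linarith
  then show ?thesis using that pos_bounds[OF assms] by blast
qed

lemma cw_small: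
  assumes D: "(\<sigma>, A) \<in> DS k b T" and t: "t < T" and u: "u < (k*b)"
  shows "1 \<le> cw k b T n \<sigma> A ((n - T*(k*b)) + t*(k*b) + u)" "cw k b T n \<sigma> A ((n - T*(k*b)) + t*(k*b) + u) \<le> T*(k*b)"
proof -
  note v = cw_val[OF D t u]
  show "1 \<le> cw k b T n \<sigma> A ((n - T*(k*b)) + t*(k*b) + u)" using cI_bounds[OF v(2)] by simp
  have "Suc (\<sigma> t ! u + (T-1-t)) \<le> T+k-1" using v(3) t by simp
  then have "Suc (\<sigma> t ! u + (T-1-t)) * (k*b - 1) \<le> (T+k-1) * (k*b - 1)" by (rule mult_le_mono1)
  then show "cw k b T n \<sigma> A ((n - T*(k*b)) + t*(k*b) + u) \<le> T*(k*b)" using cI_bounds[OF v(2)] vals by simp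
qed

lemma cw_words:
  assumes D: "(\<sigma>, A) \<in> DS k b T"
  shows "cw k b T n \<sigma> A \<in> words n"
  unfolding words_def
proof (rule PiE_I)
  fix i assume "i \<in> {0..<n}"
  then have i: "i < n" by simp
  show "cw k b T n \<sigma> A i \<in> {1..n}"
  proof (cases "i < (n - T*(k*b))")
    case True then show ?thesis using i unfolding cw_def by simp
  next
    case False
    then have "(n - T*(k*b)) \<le> i" by simp
    then obtain t u where tu: "t < T" "u < (k*b)" "i = (n - T*(k*b)) + t*(k*b) + u" using cw_decomp[OF _ i] by blast
    show ?thesis using cw_small[OF D tu(1,2)] tu(3) TKn by simp
  qed
next
  fix i assume "i \<notin> {0..<n}" then show "cw k b T n \<sigma> A i = undefined" unfolding cw_def by simp
qed

definition lab :: "(nat \<Rightarrow> nat list) \<Rightarrow> nat \<Rightarrow> nat" where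
  "lab \<sigma> i = (if i < (n - T*(k*b)) then 0 else \<sigma> ((i - (n - T*(k*b))) div (k*b)) ! ((i - (n - T*(k*b))) mod (k*b)))"

lemma lab_lt:
  assumes D: "(\<sigma>, A) \<in> DS k b T" and i: "i < n"
  shows "lab \<sigma> i < k"
proof (cases "i < (n - T*(k*b))")
  case True then show ?thesis unfolding lab_def using k2 by simp
next
  case False
  then have "(n - T*(k*b)) \<le> i" by simp
  then obtain t u where tu: "t < T" "u < (k*b)" "i = (n - T*(k*b)) + t*(k*b) + u" using cw_decomp[OF _ i] by blast
  show ?thesis using cw_val(3)[OF D tu(1,2)] pos_decomp[OF tu(1,2)] tu(3) False unfolding lab_def by simp
qed

lemma lab_dec:
  assumes D: "(\<sigma>, A) \<in> DS k b T" and ii: "i < i'" "i' < n" and l: "lab \<sigma> i = lab \<sigma> i'"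
  shows "cw k b T n \<sigma> A i' < cw k b T n \<sigma> A i"
proof (cases "i' < (n - T*(k*b))")
  case True
  then show ?thesis using ii unfolding cw_def by simp
next
  case False
  then have "(n - T*(k*b)) \<le> i'" by simp
  then obtain t' u' where tu': "t' < T" "u' < (k*b)" "i' = (n - T*(k*b)) + t'*(k*b) + u'" using cw_decomp[OF _ ii(2)] by blast
  note v' = cw_val[OF D tu'(1,2)]
  show ?thesis
  proof (cases "i < (n - T*(k*b))")
    case True
    have "cw k b T n \<sigma> A i = n - i" using True unfolding cw_def by simp
    moreover have "cw k b T n \<sigma> A i' \<le> T*(k*b)" using cw_small[OF D tu'(1,2)] tu'(3) by simp
    ultimately show ?thesis using True TKn by linarith
  next
    case False
    then have "(n - T*(k*b)) \<le> i" "i < n" using ii by simp_all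
    then obtain t u where tu: "t < T" "u < (k*b)" "i = (n - T*(k*b)) + t*(k*b) + u" using cw_decomp by blast
    note v = cw_val[OF D tu(1,2)]
    have lj: "\<sigma> t ! u = \<sigma> t' ! u'"
      using l pos_decomp[OF tu(1,2)] pos_decomp[OF tu'(1,2)] tu(3) tu'(3) unfolding lab_def by simp
    have "t \<le> t'"
    proof (rule ccontr)
      assume "\<not> t \<le> t'"
      then have "Suc t' * (k*b) \<le> t * (k*b)" by (intro mult_le_mono1) simp
      then show False using ii tu(3) tu'(3) tu'(2) by simp
    qed
    then consider "t < t'" | "t = t'" by linarith
    then show ?thesis
    proof cases
      case 1
      have "\<sigma> t' ! u' + (T-1-t') < \<sigma> t ! u + (T-1-t)" using 1 lj tu(1) tu'(1) by simp
      then show ?thesis using cI_less[OF v(2) v'(2)] tu(3) tu'(3) by simp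
    next
      case 2
      then have uu: "u < u'" using ii tu(3) tu'(3) by simp
      note F = DS_facts[OF D tu(1)]
      have j: "\<sigma> t ! u < k" by (rule v(3))
      have r: "rk (\<sigma> t) u < rk (\<sigma> t) u'" using rk_mono[OF uu] tu'(2) F(1) lj 2 by simp
      have r2: "rk (\<sigma> t) u' < card (A t (\<sigma> t ! u))"
        using rk_lt[of u' "\<sigma> t"] tu'(2) F(1) F(3)[OF j] F(5)[OF j] lj 2 by simp
      have "dv (A t (\<sigma> t ! u)) (rk (\<sigma> t) u') < dv (A t (\<sigma> t ! u)) (rk (\<sigma> t) u)"
        by (rule dv_dec[OF F(6)[OF j] r r2])
      then show ?thesis using v(1) v'(1) tu(3) tu'(3) 2 lj by simp
    qed
  qed
qed

lemma cw_avoid: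
  assumes D: "(\<sigma>, A) \<in> DS k b T"
  shows "\<not> has_weakly_inc_subseq n (k+1) (cw k b T n \<sigma> A)"
proof
  assume "has_weakly_inc_subseq n (k+1) (cw k b T n \<sigma> A)"
  then obtain idx where i1: "\<forall>j<k+1. idx j < n" and i2: "\<forall>j. Suc j < k+1 \<longrightarrow> idx j < idx (Suc j)"
    and i3: "\<forall>j. Suc j < k+1 \<longrightarrow> cw k b T n \<sigma> A (idx j) \<le> cw k b T n \<sigma> A (idx (Suc j))"
    unfolding has_weakly_inc_subseq_def by blast
  define g where "g a = lab \<sigma> (idx a)" for a
  have "g ` {0..<k+1} \<subseteq> {0..<k}" using lab_lt[OF D] i1 unfolding g_def by auto
  then have "\<not> inj_on g {0..<k+1}" using card_inj_on_le[of g "{0..<k+1}" "{0..<k}"] by auto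
  then obtain a a' where aa: "a \<in> {0..<k+1}" "a' \<in> {0..<k+1}" "a \<noteq> a'" "g a = g a'"
    unfolding inj_on_def by blast
  have key: False if "a < a'" "a < k+1" "a' < k+1" "g a = g a'" for a a'
  proof -
    have "idx a < idx a'" by (rule chain_lt[OF i2 that(1,3)])
    moreover have "cw k b T n \<sigma> A (idx a) \<le> cw k b T n \<sigma> A (idx a')"
      by (rule chain_le[where w="cw k b T n \<sigma> A" and idx=idx, OF i3 _ that(3)]) (use that in simp)
    moreover have "idx a' < n" using i1 that by simp
    ultimately show False using lab_dec[OF D, of "idx a" "idx a'"] that(4) unfolding g_def by simp
  qed
  show False
  proof (cases "a < a'")
    case True then show False using key aa by simp
  next
    case False then have "a' < a" using aa by simp
    then show False using key[of a' a] aa by simp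
  qed
qed

lemma cw_inj: "inj_on (\<lambda>(\<sigma>, A). cw k b T n \<sigma> A) (DS k b T)"
proof (rule inj_onI)
  fix X Y assume X: "X \<in> DS k b T" and Y: "Y \<in> DS k b T"
    and eq: "(\<lambda>(\<sigma>, A). cw k b T n \<sigma> A) X = (\<lambda>(\<sigma>, A). cw k b T n \<sigma> A) Y"
  obtain \<sigma> A where X': "X = (\<sigma>, A)" by (cases X)
  obtain \<sigma>' A' where Y': "Y = (\<sigma>', A')" by (cases Y)
  have D: "(\<sigma>, A) \<in> DS k b T" and D': "(\<sigma>', A') \<in> DS k b T" using X Y X' Y' by auto
  have e: "cw k b T n \<sigma> A i = cw k b T n \<sigma>' A' i" for i using eq X' Y' by simp
  have SP: "\<sigma> \<in> PiE {0..<T} (\<lambda>_. permutations_of_multiset (Mk k b))" using D unfolding DS_def by simp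
  have SP': "\<sigma>' \<in> PiE {0..<T} (\<lambda>_. permutations_of_multiset (Mk k b))" using D' unfolding DS_def by simp
  have AP: "A \<in> PiE {0..<T} (\<lambda>t. PiE {0..<k} (\<lambda>j. {B. B \<subseteq> cI (k*b-1) (j + (T-1-t)) \<and> card B = b}))"
    using D unfolding DS_def by simp
  have AP': "A' \<in> PiE {0..<T} (\<lambda>t. PiE {0..<k} (\<lambda>j. {B. B \<subseteq> cI (k*b-1) (j + (T-1-t)) \<and> card B = b}))"
    using D' unfolding DS_def by simp
  have st: "\<sigma> t = \<sigma>' t" if t: "t < T" for t
  proof (rule nth_equalityI)
    show "length (\<sigma> t) = length (\<sigma>' t)" using DS_facts(1)[OF D t] DS_facts(1)[OF D' t] by simp
    fix u assume "u < length (\<sigma> t)"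
    then have u: "u < k*b" using DS_facts(1)[OF D t] by simp
    have v1: "cw k b T n \<sigma>' A' ((n - T*(k*b)) + t*(k*b) + u) \<in> cI (k*b - 1) (\<sigma> t ! u + (T-1-t))"
      using cw_val(2)[OF D t u] e by simp
    have "\<sigma> t ! u + (T-1-t) = \<sigma>' t ! u + (T-1-t)"
      by (rule cI_eq[OF v1 cw_val(2)[OF D' t u]])
    then show "\<sigma> t ! u = \<sigma>' t ! u" by simp
  qed
  have s: "\<sigma> = \<sigma>'"
  proof (rule ext)
    fix t show "\<sigma> t = \<sigma>' t"
    proof (cases "t < T")
      case True then show ?thesis by (rule st)
    next
      case False then show ?thesis using PiE_arb[OF SP] PiE_arb[OF SP'] by simp
    qed
  qed
  have a: "A = A'"
  proof (rule ext)
    fix t show "A t = A' t"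
    proof (cases "t < T")
      case False then show ?thesis using PiE_arb[OF AP] PiE_arb[OF AP'] by simp
    next
      case t: True
      have At: "A t \<in> PiE {0..<k} (\<lambda>j. {B. B \<subseteq> cI (k*b-1) (j + (T-1-t)) \<and> card B = b})"
        using PiE_mem[OF AP, of t] t by simp
      have At': "A' t \<in> PiE {0..<k} (\<lambda>j. {B. B \<subseteq> cI (k*b-1) (j + (T-1-t)) \<and> card B = b})"
        using PiE_mem[OF AP', of t] t by simp
      show ?thesis
      proof (rule ext)
        fix j show "A t j = A' t j"
        proof (cases "j < k")
          case False then show ?thesis using PiE_arb[OF At] PiE_arb[OF At'] by simp
        next
          case j: True
          note F = DS_facts[OF D t] and F' = DS_facts[OF D' t]
          have "\<forall>r<b. dv (A t j) r = dv (A' t j) r"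
          proof (intro allI impI)
            fix r assume r: "r < b"
            obtain u where u: "u < length (\<sigma> t)" "\<sigma> t ! u = j" "count (mset (take u (\<sigma> t))) j = r"
              using count_take_surj[of r "\<sigma> t" j] r F(3)[OF j] by auto
            have uK: "u < k*b" using u F(1) by simp
            have rk: "rk (\<sigma> t) u = r" unfolding rk_def using u by simp
            have "cw k b T n \<sigma> A ((n - T*(k*b)) + t*(k*b) + u) = dv (A t j) r" using cw_val(1)[OF D t uK] u rk by simp
            moreover have "cw k b T n \<sigma>' A' ((n - T*(k*b)) + t*(k*b) + u) = dv (A' t j) r"
              using cw_val(1)[OF D' t uK] u rk st[OF t] by simp
            ultimately show "dv (A t j) r = dv (A' t j) r" using e by metis
          qed
          then show ?thesis using dv_inj[OF F(6)[OF j] F'(6)[OF j] F(5)[OF j] F'(5)[OF j]] by simp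
        qed
      qed
    qed
  qed
  show "X = Y" using X' Y' s a by simp
qed

lemma card_DS: "card (DS k b T) = card (permutations_of_multiset (Mk k b)) ^ T * ((k*b-1) choose b) ^ (k*T)"
proof -
  have cB: "card {B. B \<subseteq> cI c s \<and> card B = b} = c choose b" for c s
    using n_subsets[of "cI c s" b] unfolding cI_def by simp
  show ?thesis unfolding DS_def card_cartesian_product by (simp add: card_PiE cB power_mult)
qed

lemma wbar_ge_DS: "card (DS k b T) \<le> wbar n k"
proof -
  have "card (DS k b T) = card ((\<lambda>(\<sigma>, A). cw k b T n \<sigma> A) ` DS k b T)" using card_image[OF cw_inj] by simp
  also have "\<dots> \<le> wbar n k" unfolding wbar_def
  proof (rule card_mono)
    show "finite {w \<in> words n. \<not> has_weakly_inc_subseq n (k + 1) w}"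
      by (rule finite_subset[of _ "words n"]) (auto simp: words_def finite_PiE)
    show "(\<lambda>(\<sigma>, A). cw k b T n \<sigma> A) ` DS k b T \<subseteq> {w \<in> words n. \<not> has_weakly_inc_subseq n (k + 1) w}"
    proof (rule image_subsetI)
      fix X assume X: "X \<in> DS k b T"
      obtain \<sigma> A where X': "X = (\<sigma>, A)" by (cases X)
      show "(\<lambda>(\<sigma>, A). cw k b T n \<sigma> A) X \<in> {w \<in> words n. \<not> has_weakly_inc_subseq n (k + 1) w}"
        using cw_words[of \<sigma> A] cw_avoid[of \<sigma> A] X X' by simp
    qed
  qed
  finally show ?thesis .
qed

end

lemma fact_lower: "real m ^ m \<le> fact m * exp 1 ^ m"
proof -
  have s: "(\<lambda>i. real m^i /\<^sub>R fact i) sums exp (real m)" by (rule exp_converges)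
  have "(\<Sum>i\<in>{m}. real m^i /\<^sub>R fact i) \<le> (\<Sum>i. real m^i /\<^sub>R fact i)"
    by (rule sum_le_suminf[OF sums_summable[OF s]]) auto
  then have "real m^m / fact m \<le> exp (real m)" using sums_unique[OF s] by (simp add: divide_inverse_commute)
  moreover have "exp (real m) = exp 1 ^ m" using exp_of_nat_mult[of m 1] by simp
  ultimately show ?thesis by (simp add: divide_le_eq mult.commute)
qed

lemma e_key:
  assumes "m \<ge> 1" shows "exp 1 * real m ^ (m+1) \<le> real (m+1) ^ (m+1)"
proof -
  define q where "q = real m / real (m+1)"
  have q0: "q > 0" using assms unfolding q_def by simp
  have "ln q \<le> q - 1" by (rule ln_le_minus_one[OF q0])
  also have "q - 1 = - 1 / real (m+1)" unfolding q_def by (simp add: field_simps)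
  finally have l1: "real (m+1) * ln q \<le> -1" by (simp add: field_simps)
  have e1: "ln (q^(m+1)) = real (m+1) * ln q" by (rule ln_realpow)
  have "ln (q ^ (m+1)) \<le> -1" using l1 e1 by linarith
  then have "q ^ (m+1) \<le> exp (-1)" using q0 by (metis exp_le_cancel_iff exp_ln zero_less_power)
  then have qe: "q ^ (m+1) \<le> exp (-1)" .
  have mq: "real m ^ (m+1) = q^(m+1) * real (m+1) ^ (m+1)" unfolding q_def
    by (simp add: power_divide del: of_nat_Suc power_Suc)
  have "exp 1 * real m ^ (m+1) = exp 1 * q^(m+1) * real (m+1) ^ (m+1)" using mq by simp
  also have "\<dots> \<le> exp 1 * exp (-1) * real (m+1) ^ (m+1)"
    by (intro mult_right_mono mult_left_mono qe) auto
  also have "exp 1 * exp (-1) = (1::real)" by (simp flip: exp_add)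
  finally show ?thesis by simp
qed

lemma fact_upper: "m \<ge> 1 \<Longrightarrow> fact m * exp 1 ^ m \<le> exp 1 * real m * real m ^ m"
proof (induction m rule: dec_induct)
  case base then show ?case by simp
next
  case (step m)
  have "fact (Suc m) * exp 1 ^ Suc m = (real m + 1) * exp 1 * (fact m * exp 1 ^ m)" by (simp add: algebra_simps)
  also have "\<dots> \<le> (real m + 1) * exp 1 * (exp 1 * real m * real m ^ m)"
    by (rule mult_left_mono[OF step.IH]) simp
  also have "\<dots> = (real m + 1) * exp 1 * (exp 1 * real m ^ (m+1))" by simp
  also have "\<dots> \<le> (real m + 1) * exp 1 * (real (m+1) ^ (m+1))"
    by (rule mult_left_mono[OF e_key[OF step.hyps(1)]]) simp
  also have "\<dots> = exp 1 * real (Suc m) * real (Suc m) ^ Suc m" by simp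
  finally show ?case .
qed

lemma multinom_lower:
  assumes b1: "b \<ge> 1"
  shows "real k ^ (k*b) * (fact b)^k \<le> fact (k*b) * (exp 1 * real b)^k"
proof -
  define E :: real where "E = exp 1"
  have E0: "E > 0" unfolding E_def by simp
  have f2: "fact b * E^b \<le> E * real b * real b ^ b" using fact_upper[OF b1] unfolding E_def .
  have "(fact b * E^b)^k \<le> (E * real b * real b ^ b)^k"
    by (rule power_mono[OF f2]) (use E0 in simp)
  then have f2k: "(fact b)^k * E^(k*b) \<le> (E * real b)^k * real b ^ (k*b)"
    by (simp add: power_mult_distrib power_mult[symmetric] mult.commute)
  have f1: "real (k*b) ^ (k*b) \<le> fact (k*b) * E^(k*b)" using fact_lower unfolding E_def .
  have kb: "real (k*b) ^ (k*b) = real k ^ (k*b) * real b ^ (k*b)" by (simp add: power_mult_distrib)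
  have "(real k ^ (k*b) * (fact b)^k) * E^(k*b) = real k ^ (k*b) * ((fact b)^k * E^(k*b))" by simp
  also have "\<dots> \<le> real k ^ (k*b) * ((E * real b)^k * real b ^ (k*b))"
    by (rule mult_left_mono[OF f2k]) simp
  also have "\<dots> = (E * real b)^k * real (k*b) ^ (k*b)" using kb by simp
  also have "\<dots> \<le> (E * real b)^k * (fact (k*b) * E^(k*b))"
    by (rule mult_left_mono[OF f1]) (use E0 in simp)
  also have "\<dots> = (fact (k*b) * (E * real b)^k) * E^(k*b)" by simp
  finally show ?thesis using E0 unfolding E_def by (simp only: mult_le_cancel_right_pos zero_less_power)
qed

lemma binom_lower:
  assumes k2: "k \<ge> 2" and b1: "b \<ge> 1"
  shows "real k ^ (k*b) \<le> real (k*b choose b) * (exp 1 ^ 2 * real b * real ((k-1)*b) * real (k-1) ^ ((k-1)*b))"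
proof -
  define E :: real where "E = exp 1"
  have E0: "E > 0" unfolding E_def by simp
  define m where "m = (k-1)*b"
  define C where "C = real (k*b choose b)"
  have m1: "m \<ge> 1" unfolding m_def using k2 b1 by simp
  have Km: "k*b = b + m" unfolding m_def using k2 by (cases k) auto
  have fn: "fact b * fact m * (k*b choose b) = (fact (k*b) :: nat)"
    using binomial_fact_lemma[of b "k*b"] Km by simp
  then have fr: "fact (k*b) = fact b * fact m * C" unfolding C_def
    by (metis of_nat_fact of_nat_mult)
  have f1: "real (k*b) ^ (k*b) \<le> fact (k*b) * E^(k*b)" using fact_lower unfolding E_def .
  have fb: "fact b * E^b \<le> E * real b * real b ^ b" using fact_upper[OF b1] unfolding E_def .
  have fm: "fact m * E^m \<le> E * real m * real m ^ m" using fact_upper[OF m1] unfolding E_def .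
  have C0: "C \<ge> 0" unfolding C_def by simp
  have "fact (k*b) * E^(k*b) = C * ((fact b * E^b) * (fact m * E^m))"
    using fr Km by (simp add: power_add)
  also have "\<dots> \<le> C * ((E * real b * real b ^ b) * (E * real m * real m ^ m))"
    by (intro mult_left_mono mult_mono fb fm C0) (use E0 in auto)
  also have "real m ^ m = real (k-1) ^ m * real b ^ m" unfolding m_def by (simp add: power_mult_distrib)
  also have "C * ((E * real b * real b ^ b) * (E * real m * (real (k-1) ^ m * real b ^ m)))
      = (C * (E^2 * real b * real m * real (k-1) ^ m)) * (real b ^ b * real b ^ m)"
    by (simp add: power2_eq_square algebra_simps)
  also have "real b ^ b * real b ^ m = real b ^ (k*b)" using Km by (simp add: power_add)
  finally have A: "real (k*b) ^ (k*b) \<le> (C * (E^2 * real b * real m * real (k-1) ^ m)) * real b ^ (k*b)"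
    using f1 by linarith
  have "real (k*b) ^ (k*b) = real k ^ (k*b) * real b ^ (k*b)" by (simp add: power_mult_distrib)
  with A have "real k ^ (k*b) * real b ^ (k*b) \<le> (C * (E^2 * real b * real m * real (k-1) ^ m)) * real b ^ (k*b)"
    by simp
  moreover have pos: "real b ^ (k*b) > 0" using b1 by simp
  ultimately have "real k ^ (k*b) \<le> C * (E^2 * real b * real m * real (k-1) ^ m)"
    using mult_le_cancel_right_pos[OF pos] by blast
  then show ?thesis unfolding C_def E_def m_def .
qed

lemma round_lower:
  assumes k2: "k \<ge> 2" and b1: "b \<ge> 1"
  shows "(real k ^ (k+1) / real (k-1) ^ (k-1)) ^ (k*b) / (exp 1 ^ 3 * real k * real b ^ 3) ^ k
     \<le> real (card (permutations_of_multiset (Mk k b))) * real ((k*b-1) choose b) ^ k"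
proof -
  define E :: real where "E = exp 1"
  have E0: "E > 0" unfolding E_def by simp
  define K where "K = k*b"
  define m where "m = (k-1)*b"
  define a where "a = real k"
  define c where "c = real (k-1)"
  define P where "P = real (card (permutations_of_multiset (Mk k b)))"
  define Q where "Q = real ((k*b-1) choose b)"
  define G where "G = E^2 * real b * real K * c^m"
  define D where "D = E^3 * real k * real b ^ 3"
  have c0: "c > 0" unfolding c_def using k2 by simp
  have a0: "a > 0" unfolding a_def using k2 by simp
  have P0: "P \<ge> 0" "Q \<ge> 0" unfolding P_def Q_def by simp_all
  have D0: "D > 0" unfolding D_def using E0 k2 b1 by simp
  have G0: "G > 0" unfolding G_def using E0 c0 k2 b1 K_def by simp
  have fb0: "(fact b :: real)^k > 0" by simp
  have Plow: "a^K \<le> P * (E * real b)^k"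
  proof -
    have "a^K * (fact b)^k \<le> fact K * (E * real b)^k"
      using multinom_lower[OF b1, of k] unfolding a_def K_def E_def .
    then have "a^K \<le> fact K * (E * real b)^k / (fact b)^k" using fb0 by (simp add: le_divide_eq)
    also have "\<dots> = P * (E * real b)^k" unfolding P_def card_perm_Mk[OF b1] K_def by simp
    finally show ?thesis .
  qed
  have Qlow: "a^K \<le> Q * G"
  proof -
    have bl: "a^K \<le> real (K choose b) * (E^2 * real b * real m * c^m)"
      using binom_lower[OF k2 b1] unfolding a_def K_def E_def m_def c_def .
    have "(K - b) * (K choose b) = K * ((K - 1) choose b)" by (rule binomial_absorb_comp)
    moreover have "K - b = m" unfolding K_def m_def by (simp add: diff_mult_distrib)
    ultimately have "real m * real (K choose b) = real K * Q" unfolding Q_def K_def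
      by (metis of_nat_mult)
    then have "real (K choose b) * (E^2 * real b * real m * c^m) = Q * G" unfolding G_def
      by (simp add: algebra_simps)
    then show ?thesis using bl by simp
  qed
  have "a^K * (a^K)^k \<le> (P * (E * real b)^k) * (Q * G)^k"
    by (intro mult_mono power_mono Plow Qlow) (use a0 P0 G0 E0 in auto)
  also have "\<dots> = (P * Q^k) * ((E * real b)^k * G^k)" by (simp add: power_mult_distrib)
  finally have main: "a^K * (a^K)^k \<le> (P * Q^k) * ((E * real b)^k * G^k)" .
  have id1: "(E * real b)^k * G^k = D^k * c^((k-1)*K)"
  proof -
    have "(E * real b)^k * G^k = (E * real b * G)^k" by (simp add: power_mult_distrib)
    also have "E * real b * G = D * c^m" unfolding G_def D_def K_def by (simp add: power2_eq_square power3_eq_cube)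
    also have "(D * c^m)^k = D^k * c^(m*k)" by (simp add: power_mult_distrib power_mult)
    also have "m*k = (k-1)*K" unfolding m_def K_def by simp
    finally show ?thesis .
  qed
  have id2: "a^K * (a^K)^k = a^((k+1)*K)" by (simp add: power_mult[symmetric] power_add[symmetric] algebra_simps)
  have id3: "(a ^ (k+1) / c ^ (k-1)) ^ K = a^((k+1)*K) / c^((k-1)*K)"
  proof -
    have "(a ^ (k+1) / c ^ (k-1)) ^ K = (a^(k+1))^K / (c^(k-1))^K" by (rule power_divide)
    also have "\<dots> = a^((k+1)*K) / c^((k-1)*K)" by (simp only: power_mult)
    finally show ?thesis .
  qed
  have H0: "D^k * c^((k-1)*K) > 0" using D0 c0 by simp
  have "a^((k+1)*K) / (D^k * c^((k-1)*K)) \<le> P * Q^k"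
    using main id1 id2 H0 by (simp add: divide_le_eq)
  then have "(a ^ (k+1) / c ^ (k-1)) ^ K / D^k \<le> P * Q^k"
    unfolding id3 by (simp add: field_simps)
  then show ?thesis unfolding a_def c_def K_def D_def E_def P_def Q_def by simp
qed

lemma wbar_ge1:
  assumes "k \<ge> 1" shows "1 \<le> wbar n k"
proof -
  define w0 where "w0 i = (if i < n then n - i else undefined)" for i
  have "w0 \<in> words n" unfolding words_def w0_def by auto
  moreover have "\<not> has_weakly_inc_subseq n (k + 1) w0"
  proof
    assume "has_weakly_inc_subseq n (k + 1) w0"
    then obtain idx where i1: "\<forall>j<k+1. idx j < n" and i2: "\<forall>j. Suc j < k+1 \<longrightarrow> idx j < idx (Suc j)"
      and i3: "\<forall>j. Suc j < k+1 \<longrightarrow> w0 (idx j) \<le> w0 (idx (Suc j))"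
      unfolding has_weakly_inc_subseq_def by blast
    have "idx 0 < idx 1" "w0 (idx 0) \<le> w0 (idx 1)" "idx 1 < n" using i1 i2 i3 assms by auto
    then show False unfolding w0_def by auto
  qed
  ultimately have "w0 \<in> {w \<in> words n. \<not> has_weakly_inc_subseq n (k + 1) w}" by simp
  moreover have "finite {w \<in> words n. \<not> has_weakly_inc_subseq n (k + 1) w}"
    by (rule finite_subset[of _ "words n"]) (auto simp: words_def finite_PiE)
  ultimately show ?thesis unfolding wbar_def by (metis card_0_eq empty_iff less_one not_le)
qed

lemma wbar_lower_round:
  assumes k2: "k \<ge> 2" and b1: "b \<ge> 1" and TKn: "T*(k*b) \<le> n" and TT: "(k-1)*(k*b-1) \<le> T"
  shows "((real k ^ (k+1) / real (k-1) ^ (k-1)) ^ (k*b) / (exp 1 ^ 3 * real k * real b ^ 3) ^ k) ^ T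
    \<le> real (wbar n k)"
proof -
  have vals: "(T+k-1)*(k*b-1) \<le> T*(k*b)"
  proof -
    obtain c where c: "k*b = Suc c" using k2 b1 by (metis Suc_pred less_le_trans mult_pos_pos nat_0_less_mult_iff zero_less_one le_less_trans one_le_numeral gr0_conv_Suc)
    have "(T+k-1)*c = T*c + (k-1)*c" using k2 by (simp add: algebra_simps)
    also have "\<dots> \<le> T*c + T" using TT c by simp
    also have "\<dots> = T * Suc c" by simp
    finally show ?thesis using c by simp
  qed
  define P where "P = real (card (permutations_of_multiset (Mk k b)))"
  define Q where "Q = real ((k*b-1) choose b)"
  have "real (card (DS k b T)) = P^T * Q^(k*T)"
    unfolding P_def Q_def card_DS[OF k2 b1 TKn vals] by simp
  also have "\<dots> = (P * Q^k)^T" by (simp add: power_mult power_mult_distrib)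
  finally have cd: "real (card (DS k b T)) = (P * Q^k)^T" .
  have rl: "(real k ^ (k+1) / real (k-1) ^ (k-1)) ^ (k*b) / (exp 1 ^ 3 * real k * real b ^ 3) ^ k \<le> P * Q^k"
    using round_lower[OF k2 b1] unfolding P_def Q_def .
  have "((real k ^ (k+1) / real (k-1) ^ (k-1)) ^ (k*b) / (exp 1 ^ 3 * real k * real b ^ 3) ^ k) ^ T \<le> (P * Q^k)^T"
    by (rule power_mono[OF rl]) simp
  also have "\<dots> \<le> real (wbar n k)" using wbar_ge_DS[OF k2 b1 TKn vals] cd by simp
  finally show ?thesis .
qed

theorem theorem3p9:
  fixes k :: nat
  assumes "k \<ge> 1"
  shows "convergent (\<lambda>n. root n (real (wbar n k)))
    \<and> limsup (\<lambda>n. ereal (root n (real (wbar n k))))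
        = ereal (real k ^ (k + 1) / real (k - 1) ^ (k - 1))"
proof -
  define L where "L = real k ^ (k + 1) / real (k - 1) ^ (k - 1)"
  define f where "f n = root n (real (wbar n k))" for n
  have L0: "L \<ge> 0" unfolding L_def by simp
  have up: "f n \<le> L" if "n \<ge> 1" for n
  proof -
    have "real (wbar n k) \<le> L ^ n" using wbar_upper[OF assms] unfolding L_def .
    then have "f n \<le> root n (L ^ n)" unfolding f_def using that by (intro real_root_le_mono) auto
    also have "\<dots> = L" using that L0 by (simp add: real_root_power_cancel)
    finally show ?thesis .
  qed
  have lim: "f \<longlonglongrightarrow> L"
  proof (rule order_tendstoI)
    fix a assume aL: "L < a"
    show "eventually (\<lambda>n. f n < a) sequentially"
      using up aL by (intro eventually_sequentiallyI[of 1]) (auto intro: le_less_trans)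
  next
    fix a assume a: "a < L"
    show "eventually (\<lambda>n. a < f n) sequentially"
    proof (cases "k = 1")
      case True
      then have L1: "L = 1" unfolding L_def by simp
      have "f n = 1" if "n \<ge> 1" for n
      proof -
        have "real (wbar n k) \<le> 1" using wbar_upper[OF assms, of n] True by simp
        moreover have "1 \<le> wbar n k" by (rule wbar_ge1[OF assms])
        ultimately have "wbar n k = 1" by simp
        then show ?thesis unfolding f_def using that by simp
      qed
      then show ?thesis using a L1 by (intro eventually_sequentiallyI[of 1]) auto
    next
      case False
      then have k2: "k \<ge> 2" using assms by simp
      have L1: "L > 1"
      proof -
        have "real (k-1) ^ (k-1) \<le> real k ^ (k-1)" by (rule power_mono) auto
        also have "\<dots> < real k ^ (k+1)" using k2 by (intro power_strict_increasing) auto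
        finally have "real (k-1) ^ (k-1) < real k ^ (k+1)" .
        moreover have "real (k-1) ^ (k-1) > 0" using k2 by simp
        ultimately show ?thesis unfolding L_def by simp
      qed
      define a1 where "a1 = max a 1"
      have a1: "a1 < L" "a \<le> a1" "1 \<le> a1" using a L1 unfolding a1_def by auto
      define E :: real where "E = exp 1"
      define D where "D b = E ^ 3 * real k * real b ^ 3" for b :: nat
      define \<rho> where "\<rho> b = L / root b (D b)" for b :: nat
      have t1: "(\<lambda>b. root b (E^3 * real k) * root b (real b) ^ 3) \<longlonglongrightarrow> 1 * 1 ^ 3"
        by (intro tendsto_mult tendsto_power LIMSEQ_root LIMSEQ_root_const) (use k2 in \<open>simp add: E_def\<close>)
      have ev: "eventually (\<lambda>b. root b (E^3 * real k) * root b (real b) ^ 3 = root b (D b)) sequentially"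
        by (intro eventually_sequentiallyI[of 1]) (simp add: D_def real_root_mult real_root_power)
      have "(\<lambda>b. root b (D b)) \<longlonglongrightarrow> 1" using t1 tendsto_cong[OF ev] by simp
      then have "\<rho> \<longlonglongrightarrow> L / 1" unfolding \<rho>_def by (intro tendsto_divide tendsto_const) auto
      then have "eventually (\<lambda>b. a1 < \<rho> b) sequentially" using a1(1) by (simp add: order_tendstoD(1))
      then obtain N where N: "\<forall>b\<ge>N. a1 < \<rho> b" unfolding eventually_sequentially by blast
      define b where "b = max N 1"
      have b1: "b \<ge> 1" and \<rho>b: "a1 < \<rho> b" using N unfolding b_def by auto
      define r where "r = \<rho> b"
      have r1: "r > 1" using \<rho>b a1(3) unfolding r_def by simp
      define K where "K = k*b"
      have K0: "K > 0" using k2 b1 unfolding K_def by simp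
      have D0: "D b > 0" using b1 k2 unfolding D_def E_def by simp
      have rK: "L ^ K / D b ^ k = r ^ K"
      proof -
        have rb: "root b (D b) ^ b = D b" using b1 D0 by simp
        have "r ^ b = L ^ b / D b" unfolding r_def \<rho>_def by (simp add: power_divide rb)
        then have "r ^ K = (L^b / D b)^k" unfolding K_def using power_mult[of r b k] by (simp add: mult.commute)
        also have "\<dots> = L^K / D b ^ k" unfolding K_def by (simp add: power_divide power_mult[symmetric] mult.commute)
        finally show ?thesis by simp
      qed
      define N0 where "N0 = K * ((k-1)*(K-1)) + K"
      have low: "r powr (1 - real K / real n) \<le> f n" if n: "n \<ge> N0" for n
      proof -
        define T where "T = n div K"
        have TK: "T * K \<le> n" unfolding T_def by simp
        have "N0 div K \<le> n div K" by (rule div_le_mono[OF n])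
        moreover have "N0 div K = (k-1)*(K-1) + 1" unfolding N0_def using K0 by simp
        ultimately have TT: "(k-1)*(K-1) \<le> T" unfolding T_def by simp
        have nK: "n < T*K + K" unfolding T_def using K0
          by (metis add_less_cancel_left div_mult_mod_eq mod_less_divisor)
        have nK2: "K \<le> n" using n unfolding N0_def by simp
        have "((real k ^ (k+1) / real (k-1) ^ (k-1)) ^ (k*b) / (exp 1 ^ 3 * real k * real b ^ 3) ^ k) ^ T
            \<le> real (wbar n k)"
          by (rule wbar_lower_round[OF k2 b1]) (use TK TT in \<open>simp_all add: K_def\<close>)
        then have "(L ^ K / D b ^ k) ^ T \<le> real (wbar n k)" unfolding L_def K_def D_def E_def .
        then have rw: "r ^ (K*T) \<le> real (wbar n k)" using rK by (simp add: power_mult)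
        have nKT: "n - K \<le> K*T" using nK mult.commute[of K T] by linarith
        moreover have "r ^ (n - K) \<le> r ^ (K*T)" by (rule power_increasing[OF nKT]) (use r1 in auto)
        ultimately have w: "r^(n-K) \<le> real (wbar n k)" using rw by linarith
        have n0: "n > 0" using nK2 K0 by simp
        have "root n (r^(n-K)) \<le> f n" unfolding f_def by (rule real_root_le_mono[OF n0 w])
        moreover have "root n (r^(n-K)) = r powr (1 - real K / real n)"
        proof -
          have e1: "r^(n-K) = r powr (real (n-K))" using r1 by (simp add: powr_realpow)
          have "root n (r^(n-K)) = (r powr (real (n-K))) powr (1/n)"
            using n0 r1 unfolding e1 by (simp add: root_powr_inverse)
          also have "(r powr (real (n-K))) powr (1/n) = r powr (real (n-K) * (1/n))" by (rule powr_powr)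
          also have "real (n-K) * (1/n) = 1 - real K / real n" using nK2 n0 by (simp add: field_simps of_nat_diff)
          finally show ?thesis .
        qed
        ultimately show ?thesis by simp
      qed
      have "(\<lambda>n. r powr (1 - real K / real n)) \<longlonglongrightarrow> r powr (1 - 0)"
        by (intro tendsto_powr tendsto_const tendsto_diff lim_const_over_n) (use r1 in simp)
      then have ev1: "eventually (\<lambda>n. a1 < r powr (1 - real K / real n)) sequentially"
        using \<rho>b unfolding r_def by (simp add: order_tendstoD(1))
      have ev2: "eventually (\<lambda>n. n \<ge> N0) sequentially" by (rule eventually_ge_at_top)
      from eventually_conj[OF ev1 ev2] show ?thesis
      proof (rule eventually_mono)
        fix n assume "a1 < r powr (1 - real K / real n) \<and> N0 \<le> n"
        then show "a < f n" using low[of n] a1(2) by linarith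
      qed
    qed
  qed
  have "convergent f" using lim by (rule convergentI)
  moreover have "limsup (\<lambda>n. ereal (f n)) = ereal L"
    by (rule lim_imp_Limsup) (auto intro: lim tendsto_ereal)
  ultimately show ?thesis unfolding f_def L_def by simp
qed

end
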